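(* Let $\ell$ be a prime and let $r$ be an integer with $1\leq r\leq \ell-1$ such that $p(\ell n+r)\equiv 0\pmod{\ell}$ for all $n\geq 0$. Then for all $n\geq 0$, $d_\ell(\ell n+r)\equiv 0 \pmod{\ell}$.
   Context: $p(n)$ denotes the number of unrestricted partitions of $n$. For each integer $k\geq 1$, the numbers $d_k(n)$ are defined by $\sum_{n\geq 0} d_k(n)q^n = \frac{f_2^k}{f_1^{3k+1}}$, where $f_r = \prod_{i\geq 1}(1-q^{ri})$. *)

theory Defs
  imports "HOL-Computational_Algebra.Formal_Power_Series" "HOL-Library.Multiset"
begin

definition partitions_of :: "nat \<Rightarrow> nat multiset set" where
  "partitions_of n = {P. (\<forall>x\<in>#P. x > 0) \<and> sum_mset P = n}"

definition part :: "nat \<Rightarrow> nat" where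
  "part n = card (partitions_of n)"

text \<open>f_r = prod_{i>=1} (1 - q^(r i)) as an integer formal power series; the n-th
  coefficient is that of the truncated product over 1 <= i <= n (later factors
  do not affect coefficients of degree <= n when r >= 1).\<close>
definition f :: "nat \<Rightarrow> int fps" where
  "f r = Abs_fps (\<lambda>n. fps_nth (\<Prod>i\<in>{1..n}. (1 - fps_X ^ (r * i) :: int fps)) n)"

text \<open>d_k(n): coefficients of f_2^k / f_1^(3k+1).  Since f_1 has constant term 1,
  the quotient is f_2^k times the (unique) inverse power series of f_1^(3k+1).\<close>
definition d :: "nat \<Rightarrow> nat \<Rightarrow> int" where
  "d k n = fps_nth (f 2 ^ k * fps_right_inverse (f 1 ^ (3 * k + 1)) 1) n"

end

theory Submission imports Defs "HOL-Computational_Algebra.Primes" begin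

notation fps_nth (infixl \<open>\<section>\<close> 75)

definition Q :: "nat \<Rightarrow> nat \<Rightarrow> int fps" where "Q N r = (\<Prod>i\<in>{1..N}. 1 - fps_X ^ (r * i))"

lemma Q_Suc: "Q (Suc N) r = Q N r * (1 - fps_X ^ (r * Suc N))"
  unfolding Q_def by (simp add: prod.nat_ivl_Suc' mult.commute)

lemma Q_0[simp]: "Q 0 r = 1" unfolding Q_def by simp

lemma Q_stable1:
  assumes "r \<ge> 1" "k \<le> N" shows "Q (Suc N) r \<section> k = Q N r \<section> k"
proof -
  have "r * Suc N > k" using assms by (metis le_imp_less_Suc less_le_trans mult_1 mult_le_mono1)
  then show ?thesis unfolding Q_Suc by (simp add: algebra_simps fps_X_power_mult_right_nth)
qed

lemma Q_stable:
  assumes "r \<ge> 1" "k \<le> N" "N \<le> M" shows "Q M r \<section> k = Q N r \<section> k"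
  using assms(3)
proof (induction M rule: dec_induct)
  case (step M) then show ?case using Q_stable1[OF assms(1), of k M] assms(2) by simp
qed simp

lemma f_Q: assumes "r \<ge> 1" "k \<le> N" shows "f r \<section> k = Q N r \<section> k"
  using Q_stable[OF assms(1) order.refl assms(2)] unfolding f_def Q_def by simp

definition eqN :: "nat \<Rightarrow> int fps \<Rightarrow> int fps \<Rightarrow> bool" where
  "eqN N A B \<longleftrightarrow> (\<forall>k\<le>N. A \<section> k = B \<section> k)"

lemma eqN_mult: "eqN N A B \<Longrightarrow> eqN N C D \<Longrightarrow> eqN N (A * C) (B * D)"
  unfolding eqN_def fps_mult_nth by (auto intro!: sum.cong)

lemma eqN_power: "eqN N A B \<Longrightarrow> eqN N (A ^ j) (B ^ j)"
  by (induction j) (auto simp: eqN_def[of N 1 1] eqN_mult)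

lemma eqN_f_Q: "r \<ge> 1 \<Longrightarrow> eqN N (f r) (Q N r)"
  unfolding eqN_def using f_Q by auto

definition cg :: "nat \<Rightarrow> int fps \<Rightarrow> int fps \<Rightarrow> bool" where
  "cg l A B \<longleftrightarrow> (\<forall>n. int l dvd (A \<section> n - B \<section> n))"

lemma cg_refl: "cg l A A" unfolding cg_def by simp
lemma cg_sym: "cg l A B \<Longrightarrow> cg l B A" unfolding cg_def by (metis dvd_minus_iff minus_diff_eq)
lemma cg_trans: "cg l A B \<Longrightarrow> cg l B C \<Longrightarrow> cg l A C" unfolding cg_def
  by (metis (no_types) diff_add_cancel add_diff_eq dvd_add)

lemma cg_mult_right: assumes "cg l A B" shows "cg l (A * C) (B * C)"
  unfolding cg_def
proof
  fix n
  have "(A * C) \<section> n - (B * C) \<section> n = ((A - B) * C) \<section> n" by (simp add: algebra_simps)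
  also have "\<dots> = (\<Sum>i=0..n. (A - B) \<section> i * C \<section> (n - i))" by (rule fps_mult_nth)
  also have "int l dvd \<dots>" using assms unfolding cg_def by (intro dvd_sum) simp
  finally show "int l dvd (A * C) \<section> n - (B * C) \<section> n" .
qed

lemma cg_mult: "cg l A B \<Longrightarrow> cg l C D \<Longrightarrow> cg l (A * C) (B * D)"
  by (metis cg_mult_right cg_trans mult.commute)

lemma cg_power: "cg l A B \<Longrightarrow> cg l (A ^ j) (B ^ j)"
  by (induction j) (auto simp: cg_refl cg_mult)

lemma frob_ring:
  fixes x :: "'a::comm_ring_1"
  assumes "prime l"
  shows "\<exists>z. (1 - x) ^ l = 1 - x ^ l + of_nat l * z"
proof -
  have l0: "l > 0" using assms prime_gt_0_nat by blast
  have "(1 - x) ^ l = (\<Sum>k\<le>l. of_nat (l choose k) * (- x) ^ k)"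
    using binomial_ring[of "-x" 1 l] by (simp add: algebra_simps)
  also have "\<dots> = (\<Sum>k\<in>{0} \<union> {1..<l} \<union> {l}. of_nat (l choose k) * (- x) ^ k)"
    using l0 by (intro sum.cong) auto
  also have "\<dots> = 1 + (\<Sum>k\<in>{1..<l}. of_nat (l choose k) * (- x) ^ k) + (- x) ^ l"
    using l0 by (subst sum.union_disjoint; auto)+
  finally have eq: "(1 - x) ^ l = 1 + (\<Sum>k\<in>{1..<l}. of_nat (l choose k) * (- x) ^ k) + (- x) ^ l" .
  have "\<forall>k\<in>{1..<l}. \<exists>c. l choose k = l * c"
    using dvd_choose_prime[OF _ _ _ assms] by (auto simp: dvd_def)
  then obtain c where c: "\<And>k. k \<in> {1..<l} \<Longrightarrow> l choose k = l * c k" by metis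
  have s: "(\<Sum>k\<in>{1..<l}. of_nat (l choose k) * (- x) ^ k) = of_nat l * (\<Sum>k\<in>{1..<l}. of_nat (c k) * (- x) ^ k)"
    by (simp add: c sum_distrib_left mult.assoc)
  have "\<exists>w. (- x) ^ l = - (x ^ l) + of_nat l * w"
  proof (cases "even l")
    case True
    then have "l = 2" using assms by (metis primes_dvd_imp_eq two_is_prime_nat)
    then show ?thesis by (intro exI[of _ "x^2"]) (simp add: algebra_simps)
  next
    case False
    then show ?thesis by (intro exI[of _ 0]) simp
  qed
  then obtain w where "(- x) ^ l = - (x ^ l) + of_nat l * w" by blast
  then show ?thesis unfolding eq s
    by (intro exI[of _ "(\<Sum>k\<in>{1..<l}. of_nat (c k) * (- x) ^ k) + w"]) (simp add: algebra_simps)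
qed

lemma cg_of_eq: "A = B + fps_const (int l) * Z \<Longrightarrow> cg l A B"
  unfolding cg_def by simp

lemma cg_frob_factor: assumes "prime l" shows "cg l ((1 - fps_X ^ m) ^ l) (1 - fps_X ^ (m * l))"
proof -
  obtain z where "(1 - (fps_X ^ m :: int fps)) ^ l = 1 - (fps_X ^ m) ^ l + of_nat l * z"
    using frob_ring[OF assms] by blast
  then show ?thesis by (intro cg_of_eq[of _ _ _ z]) (simp add: power_mult fps_of_nat)
qed

lemma cg_Q: assumes "prime l" shows "cg l (Q N r ^ l) (Q N (r * l))"
proof (induction N)
  case 0 then show ?case by (simp add: cg_refl)
next
  case (Suc N)
  have "cg l ((Q N r * (1 - fps_X ^ (r * Suc N))) ^ l) (Q N (r * l) * (1 - fps_X ^ (r * Suc N * l)))"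
    unfolding power_mult_distrib using Suc cg_frob_factor[OF assms] by (intro cg_mult)
  then show ?case unfolding Q_Suc by (simp add: algebra_simps)
qed

lemma cg_f: assumes "prime l" "r \<ge> 1" shows "cg l (f r ^ l) (f (r * l))"
  unfolding cg_def
proof
  fix n
  have l: "l \<ge> 1" using assms prime_gt_0_nat by (simp add: Suc_leI)
  have "(f r ^ l) \<section> n = (Q n r ^ l) \<section> n"
    using eqN_power[OF eqN_f_Q[OF assms(2)], of n l] unfolding eqN_def by simp
  moreover have "f (r * l) \<section> n = Q n (r * l) \<section> n"
    using f_Q[of "r * l" n n] assms(2) l by simp
  ultimately show "int l dvd (f r ^ l) \<section> n - f (r * l) \<section> n"
    using cg_Q[OF assms(1), of n r] unfolding cg_def by simp
qed

definition supp :: "nat \<Rightarrow> int fps \<Rightarrow> bool" where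
  "supp l A \<longleftrightarrow> (\<forall>k. \<not> l dvd k \<longrightarrow> A \<section> k = 0)"

lemma supp_mult: assumes "supp l A" "supp l B" shows "supp l (A * B)"
  unfolding supp_def
proof (intro allI impI)
  fix k assume k: "\<not> l dvd k"
  have "\<forall>i\<in>{0..k}. A \<section> i * B \<section> (k - i) = 0"
  proof
    fix i assume "i \<in> {0..k}"
    then have "\<not> l dvd i \<or> \<not> l dvd (k - i)" using k by (metis atLeastAtMost_iff dvd_add le_add_diff_inverse)
    then show "A \<section> i * B \<section> (k - i) = 0" using assms unfolding supp_def by auto
  qed
  then show "(A * B) \<section> k = 0" unfolding fps_mult_nth by (intro sum.neutral) blast
qed

lemma supp_one: "supp l 1" unfolding supp_def by auto

lemma supp_power: "supp l A \<Longrightarrow> supp l (A ^ j)"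
  by (induction j) (auto simp: supp_one supp_mult)

lemma supp_Q: "supp l (Q N (r * l))"
proof (induction N)
  case 0 then show ?case by (simp add: supp_one)
next
  case (Suc N)
  have "supp l (1 - fps_X ^ (r * l * Suc N))" unfolding supp_def
    by (auto simp: fps_X_power_iff)
  then show ?case unfolding Q_Suc using Suc supp_mult by blast
qed

lemma supp_f: assumes "r \<ge> 1" "l \<ge> 1" shows "supp l (f (r * l))"
  unfolding supp_def
proof (intro allI impI)
  fix k assume "\<not> l dvd k"
  have "r * l \<ge> 1" using assms by simp
  then have "f (r * l) \<section> k = Q k (r * l) \<section> k" using f_Q by blast
  then show "f (r * l) \<section> k = 0" using supp_Q[of l k r] \<open>\<not> l dvd k\<close> unfolding supp_def by simp
qed

lemma f0: "r \<ge> 1 \<Longrightarrow> f r \<section> 0 = 1"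
  using f_Q[of r 0 0] by (simp add: Q_def)

lemma key:
  assumes "cg l (E * H) K" "H \<section> 0 = 1" "supp l H" "supp l K"
  shows "\<not> l dvd k \<Longrightarrow> int l dvd E \<section> k"
proof (induction k rule: less_induct)
  case (less k)
  have "(E * H) \<section> k = (\<Sum>i=0..k. E \<section> i * H \<section> (k - i))" by (rule fps_mult_nth)
  also have "\<dots> = (\<Sum>i\<in>{0..<k}. E \<section> i * H \<section> (k - i)) + E \<section> k"
    using assms(2) by (simp add: atLeastLessThanSuc_atLeastAtMost[symmetric])
  finally have eq: "(E * H) \<section> k = (\<Sum>i\<in>{0..<k}. E \<section> i * H \<section> (k - i)) + E \<section> k" .
  have "int l dvd (\<Sum>i\<in>{0..<k}. E \<section> i * H \<section> (k - i))"
  proof (intro dvd_sum)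
    fix i assume i: "i \<in> {0..<k}"
    show "int l dvd E \<section> i * H \<section> (k - i)"
    proof (cases "l dvd (k - i)")
      case True
      then have "\<not> l dvd i" using less.prems i
        by (metis atLeastLessThan_iff dvd_add le_add_diff_inverse less_or_eq_imp_le)
      then show ?thesis using less.IH i by simp
    next
      case False
      then show ?thesis using assms(3) unfolding supp_def by simp
    qed
  qed
  moreover have "int l dvd (E * H) \<section> k - K \<section> k" using assms(1) unfolding cg_def by blast
  moreover have "K \<section> k = 0" using assms(4) less.prems unfolding supp_def by blast
  ultimately show ?case unfolding eq by (metis add_diff_cancel_left' diff_zero dvd_diff)
qed

definition PS :: "nat \<Rightarrow> nat \<Rightarrow> nat multiset set" where
  "PS m n = {P. set_mset P \<subseteq> {1..m} \<and> sum_mset P = n}"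

lemma size_le_sum: "(\<forall>x\<in>#P. x > 0) \<Longrightarrow> size P \<le> sum_mset (P :: nat multiset)"
  by (induction P) auto

lemma mem_le_sum: "x \<in># P \<Longrightarrow> x \<le> sum_mset (P :: nat multiset)"
  by (induction P) auto

lemma finite_PS: "finite (PS m n)"
proof (rule finite_subset)
  show "PS m n \<subseteq> (\<Union>s\<in>{0..n}. multisets_of_size {1..m} s)"
  proof
    fix P assume "P \<in> PS m n"
    then have "set_mset P \<subseteq> {1..m}" "sum_mset P = n" unfolding PS_def by auto
    moreover then have "size P \<le> n" using size_le_sum[of P] by fastforce
    ultimately show "P \<in> (\<Union>s\<in>{0..n}. multisets_of_size {1..m} s)"
      unfolding multisets_of_size_def by auto
  qed
qed auto

lemma PS_0: "PS 0 n = (if n = 0 then {{#}} else {})"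
  unfolding PS_def by auto

lemma PS_Suc_split: "PS (Suc m) n = PS m n \<union> {P \<in> PS (Suc m) n. Suc m \<in># P}"
  unfolding PS_def by (auto simp: atLeastAtMostSuc_conv) 

lemma PS_Suc_with_empty: "n < Suc m \<Longrightarrow> {P \<in> PS (Suc m) n. Suc m \<in># P} = {}"
  unfolding PS_def using mem_le_sum by fastforce

lemma PS_Suc_with:
  assumes "Suc m \<le> n"
  shows "{P \<in> PS (Suc m) n. Suc m \<in># P} = add_mset (Suc m) ` PS (Suc m) (n - Suc m)"
proof
  show "{P \<in> PS (Suc m) n. Suc m \<in># P} \<subseteq> add_mset (Suc m) ` PS (Suc m) (n - Suc m)"
  proof
    fix P assume P: "P \<in> {P \<in> PS (Suc m) n. Suc m \<in># P}"
    then have eq: "P = add_mset (Suc m) (P - {#Suc m#})" by simp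
    have "sum_mset P = Suc m + sum_mset (P - {#Suc m#})"
      by (subst eq) simp
    moreover have "set_mset (P - {#Suc m#}) \<subseteq> set_mset P" by (meson in_diffD subsetI)
    ultimately have "P - {#Suc m#} \<in> PS (Suc m) (n - Suc m)"
      using P unfolding PS_def by auto
    then show "P \<in> add_mset (Suc m) ` PS (Suc m) (n - Suc m)" using eq by blast
  qed
next
  show "add_mset (Suc m) ` PS (Suc m) (n - Suc m) \<subseteq> {P \<in> PS (Suc m) n. Suc m \<in># P}"
    unfolding PS_def using assms by auto
qed


lemma PS_card_rec:
  "card (PS (Suc m) n) = card (PS m n) + (if Suc m \<le> n then card (PS (Suc m) (n - Suc m)) else 0)"
proof -
  have disj: "PS m n \<inter> {P \<in> PS (Suc m) n. Suc m \<in># P} = {}" unfolding PS_def by auto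
  have fin: "finite {P \<in> PS (Suc m) n. Suc m \<in># P}" using finite_PS by simp
  have "card (PS (Suc m) n) = card (PS m n) + card {P \<in> PS (Suc m) n. Suc m \<in># P}"
    by (subst PS_Suc_split) (rule card_Un_disjoint[OF finite_PS fin disj])
  moreover have "card {P \<in> PS (Suc m) n. Suc m \<in># P} = (if Suc m \<le> n then card (PS (Suc m) (n - Suc m)) else 0)"
  proof (cases "Suc m \<le> n")
    case True
    have "inj_on (add_mset (Suc m)) (PS (Suc m) (n - Suc m))" by (auto simp: inj_on_def)
    then show ?thesis using True by (simp add: PS_Suc_with card_image)
  next
    case False then show ?thesis using PS_Suc_with_empty[of n m] by (simp del: Collect_empty_eq add: not_le)
  qed
  ultimately show ?thesis by simp
qed

definition A :: "nat \<Rightarrow> int fps" where "A m = Abs_fps (\<lambda>n. int (card (PS m n)))"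

lemma A_step: "A (Suc m) * (1 - fps_X ^ Suc m) = A m"
proof (rule fps_ext)
  fix n
  show "(A (Suc m) * (1 - fps_X ^ Suc m)) \<section> n = A m \<section> n"
    unfolding right_diff_distrib A_def
    by (simp add: fps_X_power_mult_right_nth PS_card_rec[of m n] not_less del: power_Suc)
qed

lemma A_0: "A 0 = 1"
  by (rule fps_ext) (simp add: A_def PS_0)

lemma QA: "Q m 1 * A m = 1"
proof (induction m)
  case 0 then show ?case by (simp add: A_0)
next
  case (Suc m)
  have "Q (Suc m) 1 * A (Suc m) = Q m 1 * (A (Suc m) * (1 - fps_X ^ (1 * Suc m)))"
    by (simp only: Q_Suc ac_simps)
  also have "\<dots> = Q m 1 * A m" by (simp only: mult_1 A_step)
  finally show ?case using Suc by simp
qed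

lemma PS_part: "k \<le> m \<Longrightarrow> PS m k = partitions_of k"
  unfolding PS_def partitions_of_def using mem_le_sum
  by (auto simp: Suc_le_eq) (meson le_trans)

lemma part_gf: "f 1 * Abs_fps (\<lambda>n. int (part n)) = 1"
proof (rule fps_ext)
  fix n
  have "(f 1 * Abs_fps (\<lambda>n. int (part n))) \<section> n = (\<Sum>i=0..n. f 1 \<section> i * int (part (n - i)))"
    by (simp add: fps_mult_nth)
  also have "\<dots> = (\<Sum>i=0..n. Q n 1 \<section> i * A n \<section> (n - i))"
    by (intro sum.cong refl) (simp add: f_Q A_def PS_part part_def)
  also have "\<dots> = (Q n 1 * A n) \<section> n" by (simp add: fps_mult_nth)
  also have "\<dots> = (1::int fps) \<section> n" by (simp only: QA)
  finally show "(f 1 * Abs_fps (\<lambda>n. int (part n))) \<section> n = 1 \<section> n" .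
qed

theorem theorem3p2:
  fixes l r :: nat
  assumes "prime l"
    and "1 \<le> r" and "r \<le> l - 1"
    and "\<forall>n. l dvd part (l * n + r)"
  shows "\<forall>n. int l dvd d l (l * n + r)"
proof
  fix n
  have l1: "l \<ge> 1" using assms(1) prime_gt_0_nat by (simp add: Suc_leI)
  define F1 where "F1 = f 1"
  define P where "P = Abs_fps (\<lambda>n. int (part n))"
  define D where "D = f 2 ^ l * fps_right_inverse (F1 ^ (3 * l + 1)) 1"
  define E where "E = D * F1"
  have F10: "F1 \<section> 0 = 1" unfolding F1_def by (simp add: f0)
  have "F1 ^ (3 * l + 1) * fps_right_inverse (F1 ^ (3 * l + 1)) 1 = 1"
    by (rule fps_right_inverse) (simp add: F10 fps_nth_power_0)
  then have DF: "D * F1 ^ (3 * l + 1) = f 2 ^ l" unfolding D_def by (simp add: algebra_simps)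
  have EH: "E * F1 ^ (3 * l) = f 2 ^ l" unfolding E_def using DF by (simp add: algebra_simps)
  have c1: "cg l (F1 ^ (3 * l)) (f (1 * l) ^ 3)"
  proof -
    have "F1 ^ (3 * l) = (F1 ^ l) ^ 3" by (simp add: power_mult[symmetric] mult.commute)
    then show ?thesis unfolding F1_def by (metis cg_power cg_f[OF assms(1)] order.refl)
  qed
  have c2: "cg l (f 2 ^ l) (f (2 * l))" by (rule cg_f[OF assms(1)]) simp
  have "cg l (E * f (1 * l) ^ 3) (f (2 * l))"
    by (metis EH c1 c2 cg_mult cg_refl cg_sym cg_trans)
  moreover have "f (1 * l) ^ 3 \<section> 0 = 1" using l1 by (simp add: fps_nth_power_0 f0)
  moreover have "supp l (f (1 * l) ^ 3)" by (intro supp_power supp_f l1) simp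
  moreover have "supp l (f (2 * l))" by (intro supp_f l1) simp
  ultimately have Ediv: "\<And>k. \<not> l dvd k \<Longrightarrow> int l dvd E \<section> k" using key by blast
  have "D = E * P" unfolding E_def P_def using part_gf[folded F1_def] by (simp add: mult.assoc)
  then have "d l (l * n + r) = (\<Sum>i=0..l * n + r. E \<section> i * P \<section> (l * n + r - i))"
    unfolding d_def D_def F1_def by (simp add: fps_mult_nth)
  also have "int l dvd \<dots>"
  proof (intro dvd_sum)
    fix i assume i: "i \<in> {0..l * n + r}"
    show "int l dvd E \<section> i * P \<section> (l * n + r - i)"
    proof (cases "l dvd i")
      case True
      then obtain j where j: "i = l * j" by blast
      have "l * j < l * (n + 1)" using i j assms(3) l1 by auto
      then have "j \<le> n" by (metis Suc_eq_plus1 less_Suc_eq_le mult_less_cancel1)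
      then have "l * n + r - i = l * (n - j) + r" using j by (simp add: diff_mult_distrib2)
      then have "l dvd part (l * n + r - i)" using assms(4) by simp
      then show ?thesis unfolding P_def by (simp add: int_dvd_int_iff)
    next
      case False
      then show ?thesis using Ediv by simp
    qed
  qed
  finally show "int l dvd d l (l * n + r)" .
qed

end
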